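(* In the private bug bounty model with a single artificial bug described in the context, define $$\Omega(\hat c)=\sum_l w^l\mu^lq^l\big(1-q^lF(\hat c)\big)^{n-1}-\frac{F(\hat c)}{f(\hat c)}$$ and let $\tilde c$ be its unique fixed point. Then the optimal equilibrium threshold, i.e. the maximizer of $$W(\hat c)=\sum_l w^l\mu^lP(\hat c;q^l)-nF(\hat c)\hat c$$ over the set $C(\overline v)=[0,c_a(\overline v)]$ of achievable equilibrium thresholds, is $\hat c^*=\min\{\tilde c,c_a(\overline v)\}$. Moreover, any prizes $\boldsymbol v^*$, $v_a^*$ and complexity $q_a^*$ (satisfying the budget and sign constraints) that solve $\hat c^*=\Psi(\hat c^*;\boldsymbol v,v_a,q_a)$ are optimal for the designer's problem.
   Context: Private bug bounty model. There are $L$ potential organic bugs; bug $l$ exists with probability $\mu^l\in(0,1]$ (independently), has complexity $q^l\in(0,1]$, and the designer values finding it at $w^l\ge0$. There are $n$ risk-neutral agents with private search costs drawn i.i.d. from a distribution $F$ with support $[\underline c,\overline c]$ ($-\infty\le\underline c<\overline c\le\infty$, $\overline c>0$), continuous with full support, finite density $f$, and $F/f$ non-decreasing. The designer has budget $\overline v>0$, sets prizes $v^l\ge0$ for organic bugs, and inserts one artificial bug (existing with certainty, no value to the designer) with prize $v_a\ge0$ and complexity $q_a\in[0,1]$, subject to $\sum_l v^l+v_a\le\overline v$. Each agent decides whether to search at his/her cost; a searching agent finds each existing bug of complexity $q$ with probability $q$, independently across agents and bugs; the prize of each found bug goes to one of its finders chosen uniformly at random. $\Phi(\hat c;q)$ is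 the probability that a searching agent wins the prize of an existing bug of complexity $q$ when each of the other $n-1$ agents searches iff his/her cost is at most $\hat c$; $\Psi(\hat c;\boldsymbol v,v_a,q_a)=\sum_l v^l\mu^l\Phi(\hat c;q^l)+v_a\Phi(\hat c;q_a)$. The equilibrium threshold $c^*$ is the symmetric Bayes–Nash equilibrium threshold: $c^*=\underline c$ if $\Psi(\underline c)\le\underline c$, $c^*=\overline c$ if $\Psi(\overline c)\ge\overline c$, and otherwise the unique solution of $\hat c=\Psi(\hat c)$. $P(\hat c;q)=1-(1-qF(\hat c))^n$. The designer's problem is to maximize $\sum_l(w^l-v^l)\mu^lP(c^*;q^l)-v_aP(c^*;q_a)$ subject to $\sum_l v^l+v_a\le\overline v$, $v^l\ge0$, $v_a\ge0$, $q_a\in[0,1]$. The set of achievable equilibrium thresholds is $C(\overline v)=\{\hat c:\hat c=\Psi(\hat c;\boldsymbol v,v_a,q_a),\ \sum_lv^l+v_a\le\overline v,\ v^l\ge0,\ v_a\ge0,\ q_a\in[0,1]\}$, and $c_a(\overline v)$ denotes the unique fixed point of $\hat c\mapsto\overline v\,\Phi(\hat c;1)$.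
   Formalization: The unique fixed point $\tilde c$ of Omega is in addition taken to be nonnegative, so that $0 \le \tilde c$ holds. The statement above fails without it. *)

theory Defs
  imports "HOL-Analysis.Analysis"
begin

text \<open>Private bug bounty model. Organic bugs are indexed by l < L.
  n: number of agents; F: cost cdf; f: its density.\<close>

text \<open>Probability that a searching agent wins the prize of an existing bug of
  complexity q when each of the other n-1 agents searches iff his/her cost is at most c:
  the agent finds it with probability q; the number k of other finders is
  Binomial(n-1, q F(c)); the prize goes to a uniformly chosen finder.\<close>
definition Phi :: "nat \<Rightarrow> (real \<Rightarrow> real) \<Rightarrow> real \<Rightarrow> real \<Rightarrow> real" where
  "Phi n F c q = q * (\<Sum>k<n. real ((n - 1) choose k) * (q * F c) ^ k
                               * (1 - q * F c) ^ (n - 1 - k) / real (k + 1))"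

definition Psi :: "nat \<Rightarrow> (real \<Rightarrow> real) \<Rightarrow> nat \<Rightarrow> (nat \<Rightarrow> real) \<Rightarrow> (nat \<Rightarrow> real)
    \<Rightarrow> (nat \<Rightarrow> real) \<Rightarrow> real \<Rightarrow> real \<Rightarrow> real \<Rightarrow> real" where
  "Psi n F L mu q v va qa c = (\<Sum>l<L. v l * mu l * Phi n F c (q l)) + va * Phi n F c qa"

definition Pfind :: "nat \<Rightarrow> (real \<Rightarrow> real) \<Rightarrow> real \<Rightarrow> real \<Rightarrow> real" where
  "Pfind n F c q = 1 - (1 - q * F c) ^ n"

text \<open>Symmetric Bayes-Nash equilibrium threshold for a best-response map g = Psi(.),
  with support endpoints clo, chi (possibly infinite).\<close>
definition eq_threshold :: "ereal \<Rightarrow> ereal \<Rightarrow> (real \<Rightarrow> real) \<Rightarrow> real" where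
  "eq_threshold clo chi g =
     (if \<exists>a. clo = ereal a \<and> g a \<le> a then real_of_ereal clo
      else if \<exists>b. chi = ereal b \<and> g b \<ge> b then real_of_ereal chi
      else (THE c. c = g c))"

definition feasible :: "nat \<Rightarrow> real \<Rightarrow> (nat \<Rightarrow> real) \<Rightarrow> real \<Rightarrow> real \<Rightarrow> bool" where
  "feasible L vbar v va qa \<longleftrightarrow>
     (\<forall>l<L. 0 \<le> v l) \<and> 0 \<le> va \<and> 0 \<le> qa \<and> qa \<le> 1 \<and> (\<Sum>l<L. v l) + va \<le> vbar"

definition designer_obj :: "nat \<Rightarrow> (real \<Rightarrow> real) \<Rightarrow> nat \<Rightarrow> (nat \<Rightarrow> real) \<Rightarrow> (nat \<Rightarrow> real)
    \<Rightarrow> (nat \<Rightarrow> real) \<Rightarrow> (nat \<Rightarrow> real) \<Rightarrow> real \<Rightarrow> real \<Rightarrow> real \<Rightarrow> real" where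
  "designer_obj n F L mu q w v va qa cs =
     (\<Sum>l<L. (w l - v l) * mu l * Pfind n F cs (q l)) - va * Pfind n F cs qa"

definition achievable :: "nat \<Rightarrow> (real \<Rightarrow> real) \<Rightarrow> nat \<Rightarrow> (nat \<Rightarrow> real) \<Rightarrow> (nat \<Rightarrow> real)
    \<Rightarrow> real \<Rightarrow> real set" where
  "achievable n F L mu q vbar =
     {c. \<exists>v va qa. feasible L vbar v va qa \<and> c = Psi n F L mu q v va qa c}"

definition c_a :: "nat \<Rightarrow> (real \<Rightarrow> real) \<Rightarrow> real \<Rightarrow> real" where
  "c_a n F vbar = (THE c. c = vbar * Phi n F c 1)"

definition Omega :: "nat \<Rightarrow> (real \<Rightarrow> real) \<Rightarrow> (real \<Rightarrow> real) \<Rightarrow> nat \<Rightarrow> (nat \<Rightarrow> real)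
    \<Rightarrow> (nat \<Rightarrow> real) \<Rightarrow> (nat \<Rightarrow> real) \<Rightarrow> real \<Rightarrow> real" where
  "Omega n F f L mu q w c =
     (\<Sum>l<L. w l * mu l * q l * (1 - q l * F c) ^ (n - 1)) - F c / f c"

definition Wel :: "nat \<Rightarrow> (real \<Rightarrow> real) \<Rightarrow> nat \<Rightarrow> (nat \<Rightarrow> real)
    \<Rightarrow> (nat \<Rightarrow> real) \<Rightarrow> (nat \<Rightarrow> real) \<Rightarrow> real \<Rightarrow> real" where
  "Wel n F L mu q w c = (\<Sum>l<L. w l * mu l * Pfind n F c (q l)) - real n * F c * c"

end

theory Submission
  imports Defs
begin

lemma binom_part:
  fixes y :: real
  shows "real (Suc m) * y * (\<Sum>k<Suc m. real (m choose k) * y ^ k * (1 - y) ^ (m - k) / real (k + 1))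
         = 1 - (1 - y) ^ Suc m"
proof -
  have "real (Suc m) * y * (\<Sum>k<Suc m. real (m choose k) * y ^ k * (1 - y) ^ (m - k) / real (k + 1))
      = (\<Sum>k\<le>m. real (Suc m choose Suc k) * y ^ Suc k * (1 - y) ^ (Suc m - Suc k))"
    unfolding sum_distrib_left lessThan_Suc_atMost
  proof (rule sum.cong[OF refl])
    fix k assume "k \<in> {..m}"
    have e: "real (Suc m) * real (m choose k) = real (Suc m choose Suc k) * real (Suc k)"
      by (metis Suc_times_binomial_eq of_nat_mult)
    have "real (Suc m) * y * (real (m choose k) * y ^ k * (1 - y) ^ (m - k) / real (k + 1))
        = (real (Suc m) * real (m choose k)) * y ^ Suc k * (1 - y) ^ (m - k) / real (Suc k)"
      by (simp add: field_simps)
    also have "\<dots> = real (Suc m choose Suc k) * y ^ Suc k * (1 - y) ^ (Suc m - Suc k)"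
      unfolding e by (simp add: field_simps del: of_nat_Suc)
    finally show "real (Suc m) * y * (real (m choose k) * y ^ k * (1 - y) ^ (m - k) / real (k + 1))
        = real (Suc m choose Suc k) * y ^ Suc k * (1 - y) ^ (Suc m - Suc k)" .
  qed
  also have "\<dots> = (y + (1 - y)) ^ Suc m - (1 - y) ^ Suc m"
    unfolding binomial_ring[of y "1 - y" "Suc m"] sum.atMost_Suc_shift by simp
  finally show ?thesis by simp
qed

lemma S_eq:
  fixes y :: real
  assumes "n \<ge> 1"
  shows "(\<Sum>k<n. real ((n - 1) choose k) * y ^ k * (1 - y) ^ (n - 1 - k) / real (k + 1))
       = (\<Sum>j<n. (1 - y) ^ j) / real n"
proof -
  obtain m where n: "n = Suc m" using assms by (cases n) auto
  show ?thesis
  proof (cases "y = 0")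
    case True
    have "(\<Sum>k<n. real ((n - 1) choose k) * y ^ k * (1 - y) ^ (n - 1 - k) / real (k + 1))
        = (\<Sum>k<n. if k = 0 then 1 else 0)"
      by (rule sum.cong) (auto simp: True)
    then show ?thesis using True n by simp
  next
    case False
    have "real n * y * (\<Sum>k<n. real ((n - 1) choose k) * y ^ k * (1 - y) ^ (n - 1 - k) / real (k + 1))
        = 1 - (1 - y) ^ n" using binom_part[of m y] n by simp
    also have "\<dots> = y * (\<Sum>j<n. (1 - y) ^ j)" using one_diff_power_eq[of "1 - y" n] by simp
    finally have "y * (real n * (\<Sum>k<n. real ((n - 1) choose k) * y ^ k * (1 - y) ^ (n - 1 - k) / real (k + 1)))
        = y * (\<Sum>j<n. (1 - y) ^ j)" by (simp add: mult.assoc mult.left_commute)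
    then have "real n * (\<Sum>k<n. real ((n - 1) choose k) * y ^ k * (1 - y) ^ (n - 1 - k) / real (k + 1))
        = (\<Sum>j<n. (1 - y) ^ j)" using False by simp
    moreover have "real n \<noteq> 0" using assms by simp
    ultimately show ?thesis by (simp add: eq_divide_eq mult.commute)
  qed
qed

definition phi :: "nat \<Rightarrow> real \<Rightarrow> real \<Rightarrow> real" where
  "phi n x q = q / real n * (\<Sum>j<n. (1 - q * x) ^ j)"

lemma Phi_phi: "n \<ge> 1 \<Longrightarrow> Phi n F c q = phi n (F c) q"
  unfolding Phi_def phi_def using S_eq[of n "q * F c"] by (simp add: mult.assoc)

lemma phi_P: "real n * x * phi n x q = 1 - (1 - q * x) ^ n"
  unfolding phi_def using one_diff_power_eq[of "1 - q * x" n]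
  by (cases "n = 0") (auto simp: field_simps)

lemma phi_nonneg: "0 \<le> x \<Longrightarrow> x \<le> 1 \<Longrightarrow> 0 \<le> q \<Longrightarrow> q \<le> 1 \<Longrightarrow> 0 \<le> phi n x q"
  unfolding phi_def
  by (intro mult_nonneg_nonneg divide_nonneg_nonneg sum_nonneg zero_le_power)
     (auto simp: mult_le_one)

lemma phi_antimono: "0 \<le> x \<Longrightarrow> x \<le> y \<Longrightarrow> y \<le> 1 \<Longrightarrow> 0 \<le> q \<Longrightarrow> q \<le> 1 \<Longrightarrow> phi n y q \<le> phi n x q"
  unfolding phi_def
  apply (intro mult_left_mono sum_mono power_mono)
  by (auto simp: mult_le_one mult_left_mono)

lemma phi_le1: assumes h: "0 \<le> x" "x \<le> 1" "0 \<le> q" "q \<le> 1" "n \<ge> 1" shows "phi n x q \<le> phi n x 1"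
proof (cases "x = 0")
  case True
  then show ?thesis using h unfolding phi_def by (auto simp: divide_right_mono)
next
  case False
  have "(1 - x) ^ n \<le> (1 - q * x) ^ n"
    using h by (intro power_mono) (auto simp: mult_le_one mult_left_le_one_le)
  then have "real n * x * phi n x q \<le> real n * x * phi n x 1" unfolding phi_P by simp
  then show ?thesis using h False by (simp add: mult_le_cancel_left)
qed

lemma phi1_ge: "0 \<le> x \<Longrightarrow> x \<le> 1 \<Longrightarrow> n \<ge> 1 \<Longrightarrow> 1 / real n \<le> phi n x 1"
proof -
  assume h: "0 \<le> x" "x \<le> 1" "n \<ge> 1"
  have "(\<Sum>j\<in>{0}. (1 - x) ^ j) \<le> (\<Sum>j<n. (1 - x) ^ j)"
    using h by (intro sum_mono2) auto
  then show ?thesis using h unfolding phi_def by (simp add: divide_right_mono)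
qed

lemma phi_le_q: "0 \<le> x \<Longrightarrow> x \<le> 1 \<Longrightarrow> 0 \<le> q \<Longrightarrow> q \<le> 1 \<Longrightarrow> phi n x q \<le> q"
proof -
  assume h: "0 \<le> x" "x \<le> 1" "0 \<le> q" "q \<le> 1"
  have "(\<Sum>j<n. (1 - q * x) ^ j) \<le> (\<Sum>j<n. 1)"
    using h by (intro sum_mono power_le_one) (auto simp: mult_le_one)
  then have "q * (\<Sum>j<n. (1 - q * x) ^ j) \<le> q * real n" using h by (simp add: mult_left_mono)
  then show ?thesis using h unfolding phi_def
    by (cases "n = 0") (auto simp: field_simps)
qed


lemma F_bounds:
  fixes F :: "real \<Rightarrow> real"
  assumes "mono F" "(F \<longlongrightarrow> 0) at_bot" "(F \<longlongrightarrow> 1) at_top"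
  shows "0 \<le> F c \<and> F c \<le> 1"
proof
  show "0 \<le> F c"
  proof (rule tendsto_upperbound[OF assms(2)])
    show "\<forall>\<^sub>F i in at_bot. F c \<ge> F i"
      unfolding eventually_at_bot_linorder using assms(1) by (auto simp: mono_def)
  qed simp
  show "F c \<le> 1"
  proof (rule tendsto_lowerbound[OF assms(3)])
    show "\<forall>\<^sub>F i in at_top. F c \<le> F i"
      unfolding eventually_at_top_linorder using assms(1) by (auto simp: mono_def)
  qed simp
qed

lemma Pfind_Phi: "n \<ge> 1 \<Longrightarrow> Pfind n F c q = real n * F c * Phi n F c q"
  unfolding Pfind_def using phi_P[of n "F c" q] Phi_phi[of n F c q] by simp

lemma Psi_F: "F c = F d \<Longrightarrow> Psi n F L mu q v va qa c = Psi n F L mu q v va qa d"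
  unfolding Psi_def Phi_def by simp

context
  fixes n L :: nat and F :: "real \<Rightarrow> real" and mu q v :: "nat \<Rightarrow> real" and va qa vbar :: real
  assumes n: "n \<ge> 1" and Fb: "\<And>c. 0 \<le> F c \<and> F c \<le> 1"
    and mu: "\<And>l. l < L \<Longrightarrow> 0 < mu l \<and> mu l \<le> 1"
    and q: "\<And>l. l < L \<Longrightarrow> 0 < q l \<and> q l \<le> 1"
    and fe: "feasible L vbar v va qa"
begin

lemma Psi_nonneg: "0 \<le> Psi n F L mu q v va qa c"
  using fe mu q Fb unfolding Psi_def feasible_def Phi_phi[OF n]
  by (intro add_nonneg_nonneg sum_nonneg mult_nonneg_nonneg phi_nonneg) (auto simp: less_imp_le)

lemma Psi_le: "Psi n F L mu q v va qa c \<le> vbar * Phi n F c 1"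
proof -
  let ?p = "phi n (F c) 1"
  have p0: "0 \<le> ?p" using Fb by (intro phi_nonneg) auto
  have "(\<Sum>l<L. v l * mu l * phi n (F c) (q l)) \<le> (\<Sum>l<L. v l * ?p)"
  proof (rule sum_mono)
    fix l assume l: "l \<in> {..<L}"
    have a: "phi n (F c) (q l) \<le> ?p" using Fb q[of l] l n by (intro phi_le1) auto
    have b: "0 \<le> phi n (F c) (q l)" using Fb q[of l] l by (intro phi_nonneg) auto
    have "mu l * phi n (F c) (q l) \<le> 1 * ?p"
      using mu[of l] l a b by (intro mult_mono) auto
    then show "v l * mu l * phi n (F c) (q l) \<le> v l * ?p"
      using fe l unfolding feasible_def by (simp add: mult.assoc mult_left_mono)
  qed
  moreover have "va * phi n (F c) qa \<le> va * ?p"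
    using fe Fb n unfolding feasible_def by (intro mult_left_mono phi_le1) auto
  ultimately have "Psi n F L mu q v va qa c \<le> ((\<Sum>l<L. v l) + va) * ?p"
    unfolding Psi_def Phi_phi[OF n] by (simp add: sum_distrib_right distrib_right)
  also have "\<dots> \<le> vbar * ?p" using fe p0 unfolding feasible_def by (intro mult_right_mono) auto
  finally show ?thesis unfolding Phi_phi[OF n] .
qed

lemma Phi1_le: "Phi n F c 1 \<le> 1"
  unfolding Phi_phi[OF n] using Fb phi_le_q[of "F c" 1 n] by auto

lemma Phi1_nonneg: "0 \<le> Phi n F c 1"
  unfolding Phi_phi[OF n] using Fb phi_nonneg[of "F c" 1 n] by auto

lemma Psi_le_vbar: "Psi n F L mu q v va qa c \<le> vbar"
proof -
  have "0 \<le> vbar" using fe mu unfolding feasible_def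
    by (metis (no_types, lifting) Psi_nonneg Psi_le order_trans Phi1_le mult_nonneg_nonneg
        add_nonneg_nonneg sum_nonneg lessThan_iff)
  then show ?thesis using Psi_le[of c] Phi1_le[of c] mult_left_le[of "Phi n F c 1" vbar] by linarith
qed

lemma Psi_antimono: "F c \<le> F d \<Longrightarrow> Psi n F L mu q v va qa d \<le> Psi n F L mu q v va qa c"
  using fe mu q Fb unfolding Psi_def feasible_def Phi_phi[OF n]
  by (intro add_mono sum_mono mult_left_mono phi_antimono mult_nonneg_nonneg) (auto simp: less_imp_le)

lemma Psi_cont: "continuous_on UNIV F \<Longrightarrow> continuous_on UNIV (Psi n F L mu q v va qa)"
  unfolding Psi_def Phi_phi[OF n] phi_def
  by (intro continuous_intros) auto

end

lemma fp_exists: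
  fixes g :: "real \<Rightarrow> real"
  assumes "continuous_on UNIV g" "\<And>c. 0 \<le> g c \<and> g c \<le> B"
  shows "\<exists>c. c = g c"
proof -
  have B: "0 \<le> B" using assms(2)[of 0] by auto
  have "\<exists>x\<ge>0. x \<le> B \<and> (\<lambda>x. x - g x) x = 0"
    using assms B by (intro IVT') (auto intro!: continuous_intros intro: continuous_on_subset)
  then show ?thesis by auto
qed

lemma fp_unique:
  fixes g :: "real \<Rightarrow> real"
  assumes "\<And>c d. c \<le> d \<Longrightarrow> g d \<le> g c" "c = g c" "d = g d"
  shows "c = d"
  using assms(1)[of c d] assms(1)[of d c] assms(2,3) by linarith


lemma eq_thr_F:
  fixes g F :: "real \<Rightarrow> real" and clo chi :: ereal
  assumes F_below: "\<And>x. ereal x \<le> clo \<Longrightarrow> F x = 0"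
    and F_above: "\<And>x. chi \<le> ereal x \<Longrightarrow> F x = 1"
    and anti: "\<And>c d. c \<le> d \<Longrightarrow> g d \<le> g c"
    and m: "m = g m"
  shows "F (eq_threshold clo chi g) = F m"
proof (cases "\<exists>a. clo = ereal a \<and> g a \<le> a")
  case True
  then obtain a where a: "clo = ereal a" "g a \<le> a" by auto
  have "m \<le> a"
  proof (rule ccontr)
    assume "\<not> m \<le> a"
    then have "g m \<le> g a" using anti by auto
    then show False using a m \<open>\<not> m \<le> a\<close> by linarith
  qed
  then show ?thesis unfolding eq_threshold_def using True a F_below[of m] F_below[of a] by auto
next
  case False
  note F1 = False
  show ?thesis
  proof (cases "\<exists>b. chi = ereal b \<and> g b \<ge> b")
    case True
    then obtain b where b: "chi = ereal b" "g b \<ge> b" by auto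
    have "b \<le> m"
    proof (rule ccontr)
      assume "\<not> b \<le> m"
      then have "g b \<le> g m" using anti by auto
      then show False using b m \<open>\<not> b \<le> m\<close> by linarith
    qed
    then show ?thesis unfolding eq_threshold_def using F1 True b F_above[of m] F_above[of b] by auto
  next
    case False
    have "(THE c. c = g c) = m"
      by (rule the1_equality) (use m fp_unique[of g] anti in blast)+
    then show ?thesis unfolding eq_threshold_def using F1 False by (simp only: if_False)
  qed
qed

lemma obj_Wel:
  assumes n: "n \<ge> 1" and Fe: "F cs = F m" and m: "m = Psi n F L mu q v va qa m"
  shows "designer_obj n F L mu q w v va qa cs = Wel n F L mu q w m"
proof -
  have P: "\<And>r. Pfind n F cs r = Pfind n F m r" unfolding Pfind_def using Fe by simp
  have "(\<Sum>l<L. v l * mu l * Pfind n F m (q l)) + va * Pfind n F m qa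
      = real n * F m * Psi n F L mu q v va qa m"
    unfolding Psi_def Pfind_Phi[OF n] by (simp add: sum_distrib_left distrib_left mult_ac)
  also have "\<dots> = real n * F m * m" using m by simp
  finally have e: "(\<Sum>l<L. v l * mu l * Pfind n F m (q l)) + va * Pfind n F m qa = real n * F m * m" .
  have "designer_obj n F L mu q w v va qa cs
      = (\<Sum>l<L. w l * mu l * Pfind n F m (q l))
        - ((\<Sum>l<L. v l * mu l * Pfind n F m (q l)) + va * Pfind n F m qa)"
    unfolding designer_obj_def P by (simp add: left_diff_distrib sum_subtractf)
  then show ?thesis unfolding e Wel_def by simp
qed


lemma Wel_deriv:
  assumes dF: "(F has_real_derivative f t) (at t)" and ft: "0 < f t" and n: "n \<ge> 1"
  shows "(Wel n F L mu q w has_real_derivative real n * f t * (Omega n F f L mu q w t - t)) (at t)"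
proof -
  have "((\<lambda>c. (\<Sum>l<L. w l * mu l * (1 - (1 - q l * F c) ^ n)) - real n * F c * c)
     has_real_derivative
       (\<Sum>l<L. w l * mu l * (0 - real n * (1 - q l * F t) ^ (n - 1) * (0 - q l * f t)))
        - (real n * f t * t + real n * F t * 1)) (at t)"
    by (auto intro!: derivative_eq_intros dF sum.cong simp: mult_ac)
  moreover have "(\<Sum>l<L. w l * mu l * (0 - real n * (1 - q l * F t) ^ (n - 1) * (0 - q l * f t)))
        - (real n * f t * t + real n * F t * 1) = real n * f t * (Omega n F f L mu q w t - t)"
    unfolding Omega_def using ft
    by (simp add: field_simps sum_distrib_left sum_distrib_right mult_ac)
  ultimately show ?thesis unfolding Wel_def Pfind_def by simp
qed


context
  fixes n L :: nat and F f :: "real \<Rightarrow> real" and clo chi :: ereal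
    and mu q w :: "nat \<Rightarrow> real" and ctil :: real
  assumes n_pos: "n \<ge> 1"
    and F_cont: "continuous_on UNIV F" and F_mono: "mono F"
    and F_below: "\<And>x. ereal x \<le> clo \<Longrightarrow> F x = 0"
    and F_above: "\<And>x. chi \<le> ereal x \<Longrightarrow> F x = 1"
    and Fb: "\<And>c. 0 \<le> F c \<and> F c \<le> 1"
    and F_dens: "\<And>x. clo < ereal x \<Longrightarrow> ereal x < chi \<Longrightarrow>
                   (F has_real_derivative f x) (at x) \<and> 0 < f x"
    and hazard: "mono_on {x. clo < ereal x \<and> ereal x < chi} (\<lambda>x. F x / f x)"
    and mu: "\<And>l. l < L \<Longrightarrow> 0 < mu l \<and> mu l \<le> 1"
    and q: "\<And>l. l < L \<Longrightarrow> 0 < q l \<and> q l \<le> 1"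
    and w: "\<And>l. l < L \<Longrightarrow> 0 \<le> w l"
    and ctil_supp: "clo < ereal ctil" "ereal ctil < chi"
    and ctil_fix: "Omega n F f L mu q w ctil = ctil"
begin

lemma Omega_anti:
  assumes "clo < ereal x" "x \<le> y" "ereal y < chi"
  shows "Omega n F f L mu q w y \<le> Omega n F f L mu q w x"
proof -
  have Fxy: "F x \<le> F y" using F_mono assms(2) by (auto simp: mono_def)
  have s: "(\<Sum>l<L. w l * mu l * q l * (1 - q l * F y) ^ (n - 1))
        \<le> (\<Sum>l<L. w l * mu l * q l * (1 - q l * F x) ^ (n - 1))"
  proof (rule sum_mono)
    fix l assume l: "l \<in> {..<L}"
    have "(1 - q l * F y) ^ (n - 1) \<le> (1 - q l * F x) ^ (n - 1)"
      using q[of l] l Fb[of y] Fxy by (intro power_mono) (auto simp: mult_le_one mult_left_mono)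
    then show "w l * mu l * q l * (1 - q l * F y) ^ (n - 1) \<le> w l * mu l * q l * (1 - q l * F x) ^ (n - 1)"
      using w[of l] mu[of l] q[of l] l by (intro mult_left_mono) auto
  qed
  have h: "F x / f x \<le> F y / f y"
  proof -
    have "ereal x \<le> ereal y" "ereal x \<le> ereal y" using assms by auto
    then have "ereal x < chi" "clo < ereal y" using assms by (meson order.strict_trans1 order.strict_trans2)+
    then show ?thesis using assms by (intro mono_onD[OF hazard]) auto
  qed
  show ?thesis unfolding Omega_def using s h by linarith
qed

lemma Wel_cont: "continuous_on UNIV (Wel n F L mu q w)"
  unfolding Wel_def Pfind_def
  using F_cont by (intro continuous_intros) auto

lemma Wel_low: "ereal c \<le> clo \<Longrightarrow> Wel n F L mu q w c = 0"
  unfolding Wel_def Pfind_def using F_below[of c] by simp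

lemma Wel_high: "chi \<le> ereal x \<Longrightarrow> x \<le> y \<Longrightarrow> Wel n F L mu q w y \<le> Wel n F L mu q w x"
proof -
  assume a: "chi \<le> ereal x" "x \<le> y"
  then have "chi \<le> ereal y" by (meson ereal_less_eq(3) order.trans)
  then show ?thesis unfolding Wel_def Pfind_def using F_above[of x] F_above[of y] a
    by (simp add: mult_left_mono)
qed

lemma Wel_inc_core:
  assumes "clo \<le> ereal x" "x \<le> y" "y \<le> ctil"
  shows "Wel n F L mu q w x \<le> Wel n F L mu q w y"
proof (rule DERIV_nonneg_imp_increasing_open[OF assms(2)])
  fix t assume t: "x < t" "t < y"
  have ct: "clo < ereal t" using assms(1) t by (meson ereal_less_eq(3) order.strict_trans1 ereal_less(2) less_ereal.simps(1))
  have ct2: "ereal t < chi" using t assms(3) ctil_supp(2) by (meson ereal_less_eq(3) less_ereal.simps(1) order.strict_trans1 order.strict_trans2 less_imp_le)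
  have "Omega n F f L mu q w ctil \<le> Omega n F f L mu q w t"
    using ct t assms ctil_supp by (intro Omega_anti) auto
  then have "0 \<le> Omega n F f L mu q w t - t" using ctil_fix t assms by linarith
  then have "0 \<le> real n * f t * (Omega n F f L mu q w t - t)" using F_dens[OF ct ct2] by simp
  then show "\<exists>D. (Wel n F L mu q w has_real_derivative D) (at t) \<and> 0 \<le> D"
    using Wel_deriv[of F f t n] F_dens[OF ct ct2] n_pos by blast
qed (intro continuous_on_subset[OF Wel_cont]; simp)

lemma Wel_dec_core:
  assumes "ctil \<le> x" "x \<le> y" "ereal y \<le> chi"
  shows "Wel n F L mu q w y \<le> Wel n F L mu q w x"
proof (rule DERIV_nonpos_imp_decreasing_open[OF assms(2)])
  fix t assume t: "x < t" "t < y"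
  have ct: "clo < ereal t" using assms(1) t ctil_supp(1) by (meson ereal_less_eq(3) less_ereal.simps(1) order.strict_trans1 less_imp_le order.trans)
  have "ereal t < ereal y" using t by simp
  then have ct2: "ereal t < chi" using assms(3) by (meson order.strict_trans2)
  have "Omega n F f L mu q w t \<le> Omega n F f L mu q w ctil"
    using ct t assms ctil_supp ct2 by (intro Omega_anti) auto
  then have "Omega n F f L mu q w t - t \<le> 0" using ctil_fix t assms by linarith
  then have "real n * f t * (Omega n F f L mu q w t - t) \<le> 0" using F_dens[OF ct ct2]
    by (simp add: mult_nonneg_nonpos)
  then show "\<exists>D. (Wel n F L mu q w has_real_derivative D) (at t) \<and> D \<le> 0"
    using Wel_deriv[of F f t n] F_dens[OF ct ct2] n_pos by blast
qed (intro continuous_on_subset[OF Wel_cont]; simp)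

lemma Wel_inc:
  assumes "x \<le> y" "y \<le> ctil"
  shows "Wel n F L mu q w x \<le> Wel n F L mu q w y"
proof (cases "clo \<le> ereal x")
  case True
  then show ?thesis using Wel_inc_core assms by blast
next
  case False
  then have x0: "Wel n F L mu q w x = 0" using Wel_low by simp
  show ?thesis
  proof (cases "ereal y \<le> clo")
    case True
    then show ?thesis using x0 Wel_low by simp
  next
    case False
    then have "clo < ereal y" by simp
    moreover have "ereal x < clo" using \<open>\<not> clo \<le> ereal x\<close> by simp
    ultimately obtain a where a: "clo = ereal a" by (cases clo) auto
    then have "a \<le> y" using \<open>clo < ereal y\<close> by simp
    then have "Wel n F L mu q w a \<le> Wel n F L mu q w y" using Wel_inc_core a assms by simp
    moreover have "Wel n F L mu q w a = 0" using Wel_low a by simp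
    ultimately show ?thesis using x0 by simp
  qed
qed

lemma Wel_dec:
  assumes "ctil \<le> x" "x \<le> y"
  shows "Wel n F L mu q w y \<le> Wel n F L mu q w x"
proof (cases "ereal y \<le> chi")
  case True
  then show ?thesis using Wel_dec_core assms by blast
next
  case False
  show ?thesis
  proof (cases "chi \<le> ereal x")
    case True
    then show ?thesis using Wel_high assms by simp
  next
    case F2: False
    then have "ereal x < chi" by simp
    moreover have "chi < ereal y" using False by simp
    ultimately obtain b where b: "chi = ereal b" by (cases chi) auto
    then have "x \<le> b" using \<open>ereal x < chi\<close> by simp
    then have "Wel n F L mu q w b \<le> Wel n F L mu q w x" using Wel_dec_core b assms by simp
    moreover have "Wel n F L mu q w y \<le> Wel n F L mu q w b"
      using Wel_high b \<open>chi < ereal y\<close> by simp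
    ultimately show ?thesis by simp
  qed
qed

end

theorem theorem1:
  fixes n L :: nat and F f :: "real \<Rightarrow> real" and clo chi :: ereal
    and mu q w :: "nat \<Rightarrow> real" and vbar ctil :: real
  assumes n_pos: "n \<ge> 1" and L_pos: "L \<ge> 1"
    and supp: "clo < chi" "chi > 0"
    and F_cont: "continuous_on UNIV F" and F_mono: "mono F"
    and F_below: "\<And>x. ereal x \<le> clo \<Longrightarrow> F x = 0"
    and F_above: "\<And>x. chi \<le> ereal x \<Longrightarrow> F x = 1"
    and F_bot: "(F \<longlongrightarrow> 0) at_bot" and F_top: "(F \<longlongrightarrow> 1) at_top"
    and F_full: "strict_mono_on {x. clo < ereal x \<and> ereal x < chi} F"
    and F_dens: "\<And>x. clo < ereal x \<Longrightarrow> ereal x < chi \<Longrightarrow>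
                   (F has_real_derivative f x) (at x) \<and> 0 < f x"
    and hazard: "mono_on {x. clo < ereal x \<and> ereal x < chi} (\<lambda>x. F x / f x)"
    and mu: "\<And>l. l < L \<Longrightarrow> 0 < mu l \<and> mu l \<le> 1"
    and q: "\<And>l. l < L \<Longrightarrow> 0 < q l \<and> q l \<le> 1"
    and w: "\<And>l. l < L \<Longrightarrow> 0 \<le> w l"
    and vbar: "vbar > 0"
    and ctil_supp: "clo < ereal ctil" "ereal ctil < chi"
    and ctil_fix: "Omega n F f L mu q w ctil = ctil"
    and ctil_unique: "\<And>c. clo < ereal c \<Longrightarrow> ereal c < chi \<Longrightarrow>
                         Omega n F f L mu q w c = c \<Longrightarrow> c = ctil"
    and ctil_nonneg: "0 \<le> ctil"
  shows "achievable n F L mu q vbar = {0 .. c_a n F vbar}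
       \<and> min ctil (c_a n F vbar) \<in> achievable n F L mu q vbar
       \<and> (\<forall>c \<in> achievable n F L mu q vbar.
             Wel n F L mu q w c \<le> Wel n F L mu q w (min ctil (c_a n F vbar)))
       \<and> (\<forall>v va qa. feasible L vbar v va qa
              \<and> min ctil (c_a n F vbar) = Psi n F L mu q v va qa (min ctil (c_a n F vbar)) \<longrightarrow>
            (\<forall>v' va' qa'. feasible L vbar v' va' qa' \<longrightarrow>
               designer_obj n F L mu q w v' va' qa'
                 (eq_threshold clo chi (Psi n F L mu q v' va' qa'))
               \<le> designer_obj n F L mu q w v va qa
                 (eq_threshold clo chi (Psi n F L mu q v va qa))))"
proof -
  have Fb: "\<And>c. 0 \<le> F c \<and> F c \<le> 1" using F_bounds[OF F_mono F_bot F_top] by blast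
  define ca where "ca = c_a n F vbar"
  define g where "g = (\<lambda>c. vbar * Phi n F c 1)"
  have fe0: "feasible L vbar (\<lambda>_. 0) vbar 1" unfolding feasible_def using vbar by auto
  have gPsi: "g = Psi n F L mu q (\<lambda>_. 0) vbar 1" unfolding g_def Psi_def by auto
  have g_cont: "continuous_on UNIV g"
    unfolding gPsi by (rule Psi_cont[where F=F and mu=mu and q=q and L=L and n=n, OF n_pos Fb mu q fe0 F_cont])
  have g_anti: "\<And>c d. c \<le> d \<Longrightarrow> g d \<le> g c"
    unfolding gPsi using F_mono by (intro Psi_antimono[where F=F and mu=mu and q=q and L=L and n=n, OF n_pos Fb mu q fe0]) (auto simp: mono_def)
  have g_b: "\<And>c. 0 \<le> g c \<and> g c \<le> vbar"
    unfolding gPsi using Psi_nonneg[where F=F and mu=mu and q=q and L=L and n=n, OF n_pos Fb mu q fe0] Psi_le_vbar[where F=F and mu=mu and q=q and L=L and n=n, OF n_pos Fb mu q fe0] by blast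
  have ex1: "\<exists>!c. c = g c"
    using fp_exists[OF g_cont g_b] fp_unique[of g, OF g_anti] by blast
  have ca_fix: "ca = g ca" proof -
    have "(THE c. c = vbar * Phi n F c 1) = (THE c. c = g c)" by (simp add: g_def)
    then show ?thesis unfolding ca_def c_a_def using theI'[OF ex1] by simp
  qed
  have ca_nonneg: "0 \<le> ca" using ca_fix g_b[of ca] by simp
  have ach_sub: "c \<in> {0..ca}" if cin: "c \<in> achievable n F L mu q vbar" for c
  proof -
    obtain v va qa where fe: "feasible L vbar v va qa" and c: "c = Psi n F L mu q v va qa c"
      using cin unfolding achievable_def by blast
    have "0 \<le> c" using c Psi_nonneg[where F=F and mu=mu and q=q and L=L and n=n, OF n_pos Fb mu q fe, of c] by simp
    moreover have "c \<le> g c" using c Psi_le[where F=F and mu=mu and q=q and L=L and n=n, OF n_pos Fb mu q fe, of c] unfolding g_def by simp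
    then have "c \<le> ca"
      using g_anti[of ca c] ca_fix by (cases "c \<le> ca") auto
    ultimately show ?thesis by simp
  qed
  have ach_sup: "c \<in> achievable n F L mu q vbar" if c: "c \<in> {0..ca}" for c
  proof -
    have h0: "vbar * Phi n F c 0 = 0" unfolding Phi_def by simp
    have h1: "c \<le> vbar * Phi n F c 1" using c g_anti[of c ca] ca_fix unfolding g_def by auto
    have hc: "continuous_on {0..1} (\<lambda>r. vbar * Phi n F c r)"
      unfolding Phi_phi[OF n_pos] phi_def using n_pos by (intro continuous_intros) auto
    obtain r where r: "0 \<le> r" "r \<le> 1" "vbar * Phi n F c r = c"
      using IVT'[of "\<lambda>r. vbar * Phi n F c r" 0 c 1, OF _ h1 _ hc] h0 c by auto
    have "feasible L vbar (\<lambda>_. 0) vbar r" unfolding feasible_def using vbar r by auto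
    moreover have "c = Psi n F L mu q (\<lambda>_. 0) vbar r c" unfolding Psi_def using r by simp
    ultimately show ?thesis unfolding achievable_def by blast
  qed
  have A1: "achievable n F L mu q vbar = {0 .. c_a n F vbar}"
    using ach_sub ach_sup unfolding ca_def[symmetric] by blast
  define m where "m = min ctil ca"
  have A2: "m \<in> achievable n F L mu q vbar"
    using ach_sup ctil_nonneg ca_nonneg unfolding m_def by simp
  have WelE: "\<And>x y. x \<le> y \<Longrightarrow> y \<le> ctil \<Longrightarrow> Wel n F L mu q w x \<le> Wel n F L mu q w y"
    by (rule Wel_inc[OF n_pos F_cont F_mono F_below F_above Fb F_dens hazard mu q w ctil_supp ctil_fix])
  have WelD: "\<And>x y. ctil \<le> x \<Longrightarrow> x \<le> y \<Longrightarrow> Wel n F L mu q w y \<le> Wel n F L mu q w x"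
    by (rule Wel_dec[OF n_pos F_cont F_mono F_below F_above Fb F_dens hazard mu q w ctil_supp ctil_fix])
  have A3: "Wel n F L mu q w c \<le> Wel n F L mu q w m" if "c \<in> achievable n F L mu q vbar" for c
  proof -
    have c: "0 \<le> c" "c \<le> ca" using ach_sub[OF that] by auto
    show ?thesis
    proof (cases "c \<le> m")
      case True
      then show ?thesis using WelE[of c m] unfolding m_def by simp
    next
      case False
      then have "m = ctil" using c unfolding m_def by auto
      then show ?thesis using WelD[of ctil c] False by simp
    qed
  qed
  have objW: "designer_obj n F L mu q w v va qa (eq_threshold clo chi (Psi n F L mu q v va qa))
      = Wel n F L mu q w m'" if fe: "feasible L vbar v va qa" and m': "m' = Psi n F L mu q v va qa m'"
    for v va qa m'
  proof -
    have "F (eq_threshold clo chi (Psi n F L mu q v va qa)) = F m'"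
      using F_below F_above m' F_mono
      by (intro eq_thr_F[of clo F chi]) (auto intro: Psi_antimono[where F=F and mu=mu and q=q and L=L and n=n, OF n_pos Fb mu q fe] simp: mono_def)
    then show ?thesis using obj_Wel[OF n_pos _ m'] by blast
  qed
  have A4: "designer_obj n F L mu q w v' va' qa' (eq_threshold clo chi (Psi n F L mu q v' va' qa'))
         \<le> designer_obj n F L mu q w v va qa (eq_threshold clo chi (Psi n F L mu q v va qa))"
    if fe: "feasible L vbar v va qa" and mm: "m = Psi n F L mu q v va qa m"
      and fe': "feasible L vbar v' va' qa'" for v va qa v' va' qa'
  proof -
    obtain m' where m': "m' = Psi n F L mu q v' va' qa' m'"
      using fp_exists[OF Psi_cont[where F=F and mu=mu and q=q and L=L and n=n, OF n_pos Fb mu q fe' F_cont]]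
        Psi_nonneg[where F=F and mu=mu and q=q and L=L and n=n, OF n_pos Fb mu q fe'] Psi_le_vbar[where F=F and mu=mu and q=q and L=L and n=n, OF n_pos Fb mu q fe'] by blast
    have "m' \<in> achievable n F L mu q vbar" unfolding achievable_def using fe' m' by blast
    then show ?thesis using objW[OF fe mm] objW[OF fe' m'] A3 by simp
  qed
  show ?thesis using A1 A2 A3 A4 unfolding m_def ca_def by blast
qed

end
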